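(* Let $G'$ be a cubic graph, and let $G$ be a cubic graph obtained from $G'$ by replacing one edge of $G'$ with a string of diamonds. Then $r_3(G)=r_3(G')$.
   Context: Graphs are finite, without loops, possibly with multiple edges; cubic means every vertex has degree $3$. For a cubic graph $G$, $\nu_3(G)$ is the maximum number of edges of a $3$-edge-colorable subgraph, and the resistance is $r_3(G)=|E(G)|-\nu_3(G)$. A diamond is a graph isomorphic to $K_4$ minus an edge; it has two vertices of degree $2$. Replacing an edge $a=uv$ of $G'$ with a string of $k\geq 1$ diamonds means: delete $a$, add $k$ vertex-disjoint new diamonds $D_1,\dots,D_k$, and add edges joining $u$ to a degree-$2$ vertex of $D_1$, the other degree-$2$ vertex of $D_i$ to a degree-$2$ vertex of $D_{i+1}$ for $1\le i<k$, and the other degree-$2$ vertex of $D_k$ to $v$ (so $6k+1$ new edges replace $a$ and the result is cubic). *)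

theory Defs
  imports Main
begin

definition multigraph :: "'v set \<Rightarrow> 'e set \<Rightarrow> ('e \<Rightarrow> 'v set) \<Rightarrow> bool" where
  "multigraph V E ends \<longleftrightarrow> finite V \<and> finite E \<and>
     (\<forall>e\<in>E. ends e \<subseteq> V \<and> card (ends e) = 2)"

definition degree :: "'e set \<Rightarrow> ('e \<Rightarrow> 'v set) \<Rightarrow> 'v \<Rightarrow> nat" where
  "degree E ends x = card {e\<in>E. x \<in> ends e}"

definition cubic :: "'v set \<Rightarrow> 'e set \<Rightarrow> ('e \<Rightarrow> 'v set) \<Rightarrow> bool" where
  "cubic V E ends \<longleftrightarrow> multigraph V E ends \<and> (\<forall>x\<in>V. degree E ends x = 3)"

definition colorable3 :: "('e \<Rightarrow> 'v set) \<Rightarrow> 'e set \<Rightarrow> bool" where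
  "colorable3 ends F \<longleftrightarrow> (\<exists>col :: 'e \<Rightarrow> nat. (\<forall>e\<in>F. col e < 3) \<and>
     (\<forall>e\<in>F. \<forall>f\<in>F. e \<noteq> f \<and> ends e \<inter> ends f \<noteq> {} \<longrightarrow> col e \<noteq> col f))"

definition nu3 :: "'v set \<Rightarrow> 'e set \<Rightarrow> ('e \<Rightarrow> 'v set) \<Rightarrow> nat" where
  "nu3 V E ends = Max {card F | F. F \<subseteq> E \<and> colorable3 ends F}"

definition r3 :: "'v set \<Rightarrow> 'e set \<Rightarrow> ('e \<Rightarrow> 'v set) \<Rightarrow> nat" where
  "r3 V E ends = card E - nu3 V E ends"

text \<open>Replacing the edge a = uv by a string of k diamonds.  Diamond i (i < k) has vertices
  dv i 0, dv i 1, dv i 2, dv i 3, edges 01,02,12,13,23 (the missing edge is 03, so dv i 0 and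
  dv i 3 have degree 2 inside the diamond).\<close>

definition dv :: "nat \<Rightarrow> nat \<Rightarrow> 'v + nat" where
  "dv i j = Inr (4*i + j)"

definition str_V :: "'v set \<Rightarrow> nat \<Rightarrow> ('v + nat) set" where
  "str_V V k = Inl ` V \<union> Inr ` {..<4*k}"

definition str_E :: "'e set \<Rightarrow> 'e \<Rightarrow> nat \<Rightarrow> ('e + nat) set" where
  "str_E E a k = Inl ` (E - {a}) \<union> Inr ` {..6*k}"

definition str_ends :: "('e \<Rightarrow> 'v set) \<Rightarrow> 'v \<Rightarrow> 'v \<Rightarrow> nat \<Rightarrow> ('e + nat) \<Rightarrow> ('v + nat) set" where
  "str_ends ends u v k x = (case x of
      Inl e \<Rightarrow> Inl ` ends e
    | Inr n \<Rightarrow>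
        (let i = n div 6; j = n mod 6 in
         if n = 6*k then {Inl u, dv 0 0}
         else if j = 0 then {dv i 0, dv i 1}
         else if j = 1 then {dv i 0, dv i 2}
         else if j = 2 then {dv i 1, dv i 2}
         else if j = 3 then {dv i 1, dv i 3}
         else if j = 4 then {dv i 2, dv i 3}
         else if i + 1 < k then {dv i 3, dv (i+1) 0}
         else {dv i 3, Inl v}))"

end

theory Submission
  imports Defs
begin


definition P :: "nat \<Rightarrow> nat \<Rightarrow> nat \<Rightarrow> bool" where
 "P k n x \<longleftrightarrow> (n = 6*k \<and> x = 0) \<or> (n < 6*k \<and>
   ((n mod 6 = 0 \<and> (x = 4*(n div 6) \<or> x = 4*(n div 6)+1)) \<or>
    (n mod 6 = 1 \<and> (x = 4*(n div 6) \<or> x = 4*(n div 6)+2)) \<or>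
    (n mod 6 = 2 \<and> (x = 4*(n div 6)+1 \<or> x = 4*(n div 6)+2)) \<or>
    (n mod 6 = 3 \<and> (x = 4*(n div 6)+1 \<or> x = 4*(n div 6)+3)) \<or>
    (n mod 6 = 4 \<and> (x = 4*(n div 6)+2 \<or> x = 4*(n div 6)+3)) \<or>
    (n mod 6 = 5 \<and> (x = 4*(n div 6)+3 \<or> (n div 6 + 1 < k \<and> x = 4*(n div 6)+4)))))"

definition tt :: "nat \<Rightarrow> nat \<Rightarrow> nat" where
 "tt k n = (if n = 6*k then 0 else if n mod 6 = 0 then 1 else if n mod 6 = 1 then 2
    else if n mod 6 = 2 then 0 else if n mod 6 = 3 then 2 else if n mod 6 = 4 then 1 else 0)"

lemma Inr_mem: "n \<le> 6*k \<Longrightarrow> Inr x \<in> str_ends ends u v k (Inr n) \<longleftrightarrow> P k n x"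
  unfolding str_ends_def P_def dv_def Let_def
  by (auto split: if_splits)

definition ff :: "nat \<Rightarrow> nat \<Rightarrow> nat \<Rightarrow> nat" where
 "ff k x c = (let q = x div 4; r = x mod 4 in
   if r = 0 then (if c = 1 then 6*q else if c = 2 then 6*q+1 else if q = 0 then 6*k else 6*q-1)
   else if r = 1 then (if c = 1 then 6*q else if c = 2 then 6*q+3 else 6*q+2)
   else if r = 2 then (if c = 1 then 6*q+4 else if c = 2 then 6*q+1 else 6*q+2)
   else (if c = 1 then 6*q+4 else if c = 2 then 6*q+3 else 6*q+5))"

lemma dm4: "Suc (4*i) div 4 = i" "Suc (4*i) mod 4 = 1" "Suc (Suc (4*i)) div 4 = i" "Suc (Suc (4*i)) mod 4 = 2"
  "(4*i+3) div 4 = i" "(4*i+3) mod 4 = 3" "(4*i+4) div 4 = Suc i" "(4*i+4) mod 4 = 0"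
  "\<not> 4 dvd Suc (4*i)" "\<not> 4 dvd Suc (Suc (4*i))" "\<not> 4 dvd (4*i+3)"
  by presburger+

lemma ff_aux: assumes "j < 6" "6*i+j \<le> 6*k" "P k (6*i+j) x" shows "6*i+j = ff k x (tt k (6*i+j))"
proof -
  have d: "(6*i+j) div 6 = i" "(6*i+j) mod 6 = j"
    using assms(1) by auto
  have "j \<in> {0,1,2,3,4,5}" using assms(1) by auto
  then show ?thesis using assms(2-3) unfolding P_def tt_def d ff_def Let_def
    by (elim insertE; auto simp: dm4)
qed

lemma tt_lemma: "n \<le> 6*k \<Longrightarrow> m \<le> 6*k \<Longrightarrow> n \<noteq> m \<Longrightarrow> P k n x \<Longrightarrow> P k m x \<Longrightarrow> tt k n \<noteq> tt k m"
proof -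
  have en: "6 * (n div 6) + n mod 6 = n" "6 * (m div 6) + m mod 6 = m" by simp_all
  assume a: "n \<le> 6*k" "m \<le> 6*k" "n \<noteq> m" "P k n x" "P k m x"
  have "n = ff k x (tt k n)" using ff_aux[of "n mod 6" "n div 6" k x] a unfolding en by simp
  moreover have "m = ff k x (tt k m)" using ff_aux[of "m mod 6" "m div 6" k x] a unfolding en by simp
  ultimately show ?thesis using a(3) by metis
qed

lemma tt_lt3: "tt k n < 3" unfolding tt_def by simp

lemma tt_0: "k \<ge> 1 \<Longrightarrow> tt k (6*k) = 0" "k \<ge> 1 \<Longrightarrow> tt k (6*(k-1)+5) = 0"
proof -
  assume "k \<ge> 1"
  then have "6*(k-1)+5 \<noteq> 6*k" "(6*(k-1)+5) mod 6 = 5" by auto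
  then show "tt k (6*(k-1)+5) = 0" unfolding tt_def by simp
next
  show "tt k (6*k) = 0" unfolding tt_def by simp
qed



lemma three: "(a::nat)<3 \<Longrightarrow> b<3 \<Longrightarrow> c<3 \<Longrightarrow> d<3 \<Longrightarrow> a\<noteq>b \<Longrightarrow> b\<noteq>c \<Longrightarrow> a\<noteq>c \<Longrightarrow> d\<noteq>a \<Longrightarrow> d\<noteq>b \<Longrightarrow> d = c"
  by arith
lemma mod3_inj: "(a::nat) < 3 \<Longrightarrow> b < 3 \<Longrightarrow> a \<noteq> b \<Longrightarrow> (c + a) mod 3 \<noteq> (c + b) mod 3"
proof -
  assume "a < 3" "b < 3" "a \<noteq> b"
  then have "a \<in> {0,1,2}" "b \<in> {0,1,2}" by auto
  then show ?thesis using \<open>a \<noteq> b\<close> by (elim insertE; simp; presburger)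
qed
lemma Inl_mem: "n \<le> 6*k \<Longrightarrow> Inl w \<in> str_ends ends u v k (Inr n) \<Longrightarrow>
   (n = 6*k \<and> w = u) \<or> (k \<ge> 1 \<and> n = 6*(k-1)+5 \<and> w = v)"
  unfolding str_ends_def dv_def Let_def
  apply (auto split: if_splits)
proof -
  assume p: "n \<le> 6 * k" "n \<noteq> 6 * k" "0 < n mod 6" "n mod 6 \<noteq> Suc 0" "n mod 6 \<noteq> 2"
     "n mod 6 \<noteq> 3" "n mod 6 \<noteq> 4" "\<not> Suc (n div 6) < k"
  have "n mod 6 < 6" by simp
  then have r: "n mod 6 = 5" using p(3-7) by linarith
  have e: "n = 6 * (n div 6) + n mod 6" by simp
  show "n = 6 * (k - Suc 0) + 5" using e r p(1,2,8) by linarith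
qed
lemma diamond: "(cin::nat)<3 \<Longrightarrow> e0<3 \<Longrightarrow> e1<3 \<Longrightarrow> e2<3 \<Longrightarrow> e3<3 \<Longrightarrow> e4<3 \<Longrightarrow> x<3 \<Longrightarrow>
  cin\<noteq>e0 \<Longrightarrow> cin\<noteq>e1 \<Longrightarrow> e0\<noteq>e1 \<Longrightarrow> e0\<noteq>e2 \<Longrightarrow> e0\<noteq>e3 \<Longrightarrow> e2\<noteq>e3 \<Longrightarrow> e1\<noteq>e2 \<Longrightarrow>
  e1\<noteq>e4 \<Longrightarrow> e2\<noteq>e4 \<Longrightarrow> e3\<noteq>e4 \<Longrightarrow> e3\<noteq>x \<Longrightarrow> e4\<noteq>x \<Longrightarrow> x = cin"
proof -
  assume h: "cin<3" "e0<3" "e1<3" "e2<3" "e3<3" "e4<3" "x<3"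
    "cin\<noteq>e0" "cin\<noteq>e1" "e0\<noteq>e1" "e0\<noteq>e2" "e0\<noteq>e3" "e2\<noteq>e3" "e1\<noteq>e2"
    "e1\<noteq>e4" "e2\<noteq>e4" "e3\<noteq>e4" "e3\<noteq>x" "e4\<noteq>x"
  have 2: "e2 = cin" using three[of e0 e1 cin e2] h by auto
  have 3: "e3 = e1" using three[of e0 cin e1 e3] h 2 by auto
  have 4: "e4 = e0" using three[of e1 cin e0 e4] h 2 by auto
  show "x = cin" using three[of e1 e0 cin x] h 3 4 by auto
qed

lemma ends_new: assumes "i < k" "j < 6"
  shows "str_ends ends u v k (Inr (6*i+j)) = (if j=0 then {dv i 0, dv i 1} else if j=1 then {dv i 0, dv i 2}
    else if j=2 then {dv i 1, dv i 2} else if j=3 then {dv i 1, dv i 3} else if j=4 then {dv i 2, dv i 3}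
    else if i+1<k then {dv i 3, dv (i+1) 0} else {dv i 3, Inl v})"
proof -
  have d: "(6*i+j) div 6 = i" "(6*i+j) mod 6 = j" "6*i+j \<noteq> 6*k"
    using assms by auto
  have d3: "(6*i+j = 6*k) = False" using d(3) by simp
  show ?thesis unfolding str_ends_def Let_def sum.case d(1,2) d3 if_False by (rule refl)
qed

lemma ends_u: "str_ends ends u v k (Inr (6*k)) = {Inl u, dv 0 0}"
  unfolding str_ends_def by simp



lemma dstep:
  assumes hprop: "\<forall>e\<in>F. \<forall>f\<in>F. e\<noteq>f \<and> str_ends ends u v k e \<inter> str_ends ends u v k f \<noteq> {} \<longrightarrow> col e \<noteq> col f"
    and col3: "\<forall>e\<in>F. col e < (3::nat)"
    and all: "Inr ` {..6*k} \<subseteq> F" and ik: "i < k" and nin: "nin \<le> 6*k"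
    and m: "dv i 0 \<in> str_ends ends u v k (Inr nin)" and out: "nin < 6*i \<or> nin > 6*i+5"
  shows "col (Inr (6*i+5)) = col (Inr nin)"
proof -
  have inF: "\<And>n. n \<le> 6*k \<Longrightarrow> Inr n \<in> F" using all by auto
  have adj: "\<And>n m w. n \<le> 6*k \<Longrightarrow> m \<le> 6*k \<Longrightarrow> n \<noteq> m \<Longrightarrow> w \<in> str_ends ends u v k (Inr n)
     \<Longrightarrow> w \<in> str_ends ends u v k (Inr m) \<Longrightarrow> col (Inr n) \<noteq> col (Inr m)"
  proof -
    fix n m w assume h: "n \<le> 6*k" "m \<le> 6*k" "n \<noteq> m" "w \<in> str_ends ends u v k (Inr n)"
       "w \<in> str_ends ends u v k (Inr m)"
    then have "str_ends ends u v k (Inr n) \<inter> str_ends ends u v k (Inr m) \<noteq> {}" by blast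
    then show "col (Inr n) \<noteq> col (Inr m)" using hprop inF[OF h(1)] inF[OF h(2)] h(3) by blast
  qed
  have lt: "\<And>n. n \<le> 6*k \<Longrightarrow> col (Inr n) < 3" using col3 inF by blast
  have le: "\<And>j. j < 6 \<Longrightarrow> 6*i+j \<le> 6*k" using ik by auto
  have nne: "nin \<noteq> 6*i" "nin \<noteq> 6*i+1" "nin \<noteq> 6*i+2" "nin \<noteq> 6*i+3" "nin \<noteq> 6*i+4" "nin \<noteq> 6*i+5" using out by auto
  have E0: "str_ends ends u v k (Inr (6*i)) = {dv i 0, dv i 1}" using ends_new[OF ik, of 0 ends u v] by simp
  have E1: "str_ends ends u v k (Inr (6*i+1)) = {dv i 0, dv i 2}" using ends_new[OF ik, of 1 ends u v] by simp
  have E2: "str_ends ends u v k (Inr (6*i+2)) = {dv i 1, dv i 2}" using ends_new[OF ik, of 2 ends u v] by simp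
  have E3: "str_ends ends u v k (Inr (6*i+3)) = {dv i 1, dv i 3}" using ends_new[OF ik, of 3 ends u v] by simp
  have E4: "str_ends ends u v k (Inr (6*i+4)) = {dv i 2, dv i 3}" using ends_new[OF ik, of 4 ends u v] by simp
  have E5: "dv i 3 \<in> str_ends ends u v k (Inr (6*i+5))" using ends_new[OF ik, of 5 ends u v] by simp
  have a1: "col (Inr nin) \<noteq> col (Inr (6*i+0))" by (rule adj[OF nin le _ m]) (use E0 nne in auto)
  have a2: "col (Inr nin) \<noteq> col (Inr (6*i+1))" by (rule adj[OF nin le _ m]) (use E1 nne in auto)
  have a3: "col (Inr (6*i+0)) \<noteq> col (Inr (6*i+1))" by (rule adj[OF le le _ _, of 0 1 "dv i 0"]) (use E0 E1 in auto)
  have a4: "col (Inr (6*i+0)) \<noteq> col (Inr (6*i+2))" by (rule adj[OF le le _ _, of 0 2 "dv i 1"]) (use E0 E2 in auto)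
  have a5: "col (Inr (6*i+0)) \<noteq> col (Inr (6*i+3))" by (rule adj[OF le le _ _, of 0 3 "dv i 1"]) (use E0 E3 in auto)
  have a6: "col (Inr (6*i+2)) \<noteq> col (Inr (6*i+3))" by (rule adj[OF le le _ _, of 2 3 "dv i 1"]) (use E2 E3 in auto)
  have a7: "col (Inr (6*i+1)) \<noteq> col (Inr (6*i+2))" by (rule adj[OF le le _ _, of 1 2 "dv i 2"]) (use E1 E2 in auto)
  have a8: "col (Inr (6*i+1)) \<noteq> col (Inr (6*i+4))" by (rule adj[OF le le _ _, of 1 4 "dv i 2"]) (use E1 E4 in auto)
  have a9: "col (Inr (6*i+2)) \<noteq> col (Inr (6*i+4))" by (rule adj[OF le le _ _, of 2 4 "dv i 2"]) (use E2 E4 in auto)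
  have a10: "col (Inr (6*i+3)) \<noteq> col (Inr (6*i+4))" by (rule adj[OF le le _ _, of 3 4 "dv i 3"]) (use E3 E4 in auto)
  have a11: "col (Inr (6*i+3)) \<noteq> col (Inr (6*i+5))" by (rule adj[OF le le _ _, of 3 5 "dv i 3"]) (use E3 E5 in auto)
  have a12: "col (Inr (6*i+4)) \<noteq> col (Inr (6*i+5))" by (rule adj[OF le le _ _, of 4 5 "dv i 3"]) (use E4 E5 in auto)
  show ?thesis
    by (rule diamond[OF lt[OF nin] lt[OF le] lt[OF le] lt[OF le] lt[OF le] lt[OF le] lt[OF le]
        a1 a2 a3 a4 a5 a6 a7 a8 a9 a10 a11 a12]) simp_all
qed

lemma chain:
  assumes hprop: "\<forall>e\<in>F. \<forall>f\<in>F. e\<noteq>f \<and> str_ends ends u v k e \<inter> str_ends ends u v k f \<noteq> {} \<longrightarrow> col e \<noteq> col f"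
    and col3: "\<forall>e\<in>F. col e < (3::nat)"
    and all: "Inr ` {..6*k} \<subseteq> F"
  shows "i < k \<Longrightarrow> col (Inr (6*i+5)) = col (Inr (6*k))"
proof (induction i)
  case 0
  have "col (Inr (6*0+5)) = col (Inr (6*k))"
    by (rule dstep[OF hprop col3 all 0]) (use 0 in \<open>auto simp: ends_u\<close>)
  then show ?case by simp
next
  case (Suc i)
  have "col (Inr (6*Suc i+5)) = col (Inr (6*i+5))"
    by (rule dstep[OF hprop col3 all Suc.prems]) (use Suc.prems ends_new[of i k 5 ends u v] in auto)
  then show ?case using Suc by simp
qed



lemma nu3_set_fin: "finite E \<Longrightarrow> finite {card F |F. F \<subseteq> E \<and> colorable3 ends F}"
proof -
  assume "finite E"
  have "{card F |F. F \<subseteq> E \<and> colorable3 ends F} \<subseteq> card ` Pow E" by auto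
  then show ?thesis using \<open>finite E\<close> finite_subset by blast
qed

lemma col_empty: "colorable3 ends {}" unfolding colorable3_def by auto

lemma nu3_ge: "finite E \<Longrightarrow> F \<subseteq> E \<Longrightarrow> colorable3 ends F \<Longrightarrow> card F \<le> nu3 V E ends"
  unfolding nu3_def by (rule Max_ge) (auto intro: nu3_set_fin)

lemma nu3_le: "finite E \<Longrightarrow> (\<And>F. F \<subseteq> E \<Longrightarrow> colorable3 ends F \<Longrightarrow> card F \<le> b) \<Longrightarrow> nu3 V E ends \<le> b"
  unfolding nu3_def using col_empty[of ends]
  by (subst Max_le_iff) (auto intro: nu3_set_fin)

lemma nu3_obt: "finite E \<Longrightarrow> \<exists>F. F \<subseteq> E \<and> colorable3 ends F \<and> card F = nu3 V E ends"
proof -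
  assume f: "finite E"
  have "nu3 V E ends \<in> {card F |F. F \<subseteq> E \<and> colorable3 ends F}"
    unfolding nu3_def using col_empty[of ends] by (intro Max_in nu3_set_fin f) auto
  then show ?thesis by auto
qed

lemma build:
  assumes uv: "u \<noteq> v" and k1: "k \<ge> 1"
    and c3: "\<forall>e\<in>F. col e < 3"
    and cp: "\<forall>e\<in>F. \<forall>f\<in>F. e\<noteq>f \<and> ends e \<inter> ends f \<noteq> {} \<longrightarrow> col e \<noteq> col f"
    and c: "c < (3::nat)" and N: "N \<subseteq> {..6*k}"
    and cu: "\<forall>e\<in>F. u \<in> ends e \<longrightarrow> 6*k \<in> N \<longrightarrow> col e \<noteq> c"
    and cv: "\<forall>e\<in>F. v \<in> ends e \<longrightarrow> 6*(k-1)+5 \<in> N \<longrightarrow> col e \<noteq> c"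
  shows "colorable3 (str_ends ends u v k) (Inl`F \<union> Inr`N)"
proof -
  let ?SE = "str_ends ends u v k"
  define cg where "cg = (\<lambda>x. case x of Inl e \<Rightarrow> col e | Inr n \<Rightarrow> (c + tt k n) mod 3)"
  have key: "col e \<noteq> (c + tt k n) mod 3"
    if e: "e \<in> F" and n: "n \<in> N" and ne: "?SE (Inl e) \<inter> ?SE (Inr n) \<noteq> {}" for e n
  proof -
    obtain w where w: "w \<in> ?SE (Inl e)" "w \<in> ?SE (Inr n)" using ne by blast
    from w(1) obtain w' where w': "w = Inl w'" "w' \<in> ends e" by (auto simp: str_ends_def)
    have nk: "n \<le> 6*k" using n N by auto
    have "(n = 6*k \<and> w' = u) \<or> (k \<ge> 1 \<and> n = 6*(k-1)+5 \<and> w' = v)"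
      using Inl_mem[OF nk, of w' ends u v] w(2) unfolding w'(1) by blast
    then show ?thesis
    proof
      assume h: "n = 6*k \<and> w' = u"
      then have "col e \<noteq> c" using cu e n w'(2) by auto
      moreover have "tt k n = 0" using h tt_0[OF k1] by metis
      ultimately show ?thesis using c by simp
    next
      assume h: "k \<ge> 1 \<and> n = 6*(k-1)+5 \<and> w' = v"
      then have "col e \<noteq> c" using cv e n w'(2) by auto
      moreover have "tt k n = 0" using h tt_0[OF k1] by metis
      ultimately show ?thesis using c by simp
    qed
  qed
  have key2: "(c + tt k n) mod 3 \<noteq> (c + tt k m) mod 3"
    if n: "n \<in> N" and m: "m \<in> N" and nm: "n \<noteq> m" and ne: "?SE (Inr n) \<inter> ?SE (Inr m) \<noteq> {}" for n m
  proof -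
    obtain w where w: "w \<in> ?SE (Inr n)" "w \<in> ?SE (Inr m)" using ne by blast
    have nk: "n \<le> 6*k" "m \<le> 6*k" using n m N by auto
    show ?thesis
    proof (cases w)
      case (Inl w')
      have "(n = 6*k \<and> w' = u) \<or> (k \<ge> 1 \<and> n = 6*(k-1)+5 \<and> w' = v)"
        using Inl_mem[OF nk(1), of w' ends u v] w(1) unfolding Inl by blast
      moreover have "(m = 6*k \<and> w' = u) \<or> (k \<ge> 1 \<and> m = 6*(k-1)+5 \<and> w' = v)"
        using Inl_mem[OF nk(2), of w' ends u v] w(2) unfolding Inl by blast
      ultimately have "n = m \<or> u = v" by metis
      then show ?thesis using nm uv by blast
    next
      case (Inr x)
      have "P k n x" "P k m x" using Inr_mem[OF nk(1), of x ends u v] Inr_mem[OF nk(2), of x ends u v] w unfolding Inr by blast+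
      then have "tt k n \<noteq> tt k m" using tt_lemma nk nm by blast
      then show ?thesis using mod3_inj tt_lt3 by blast
    qed
  qed
  show ?thesis unfolding colorable3_def
  proof (intro exI[of _ cg] conjI ballI impI)
    fix x assume "x \<in> Inl`F \<union> Inr`N"
    then show "cg x < 3" using c3 by (auto simp: cg_def)
  next
    fix x y assume x: "x \<in> Inl`F \<union> Inr`N" and y: "y \<in> Inl`F \<union> Inr`N"
      and h: "x \<noteq> y \<and> ?SE x \<inter> ?SE y \<noteq> {}"
    show "cg x \<noteq> cg y"
    proof (cases x)
      case (Inl e)
      then have e: "e \<in> F" using x by auto
      show ?thesis
      proof (cases y)
        case (Inl f)
        then have f: "f \<in> F" using y by auto
        have "ends e \<inter> ends f \<noteq> {}" using h Inl \<open>x = Inl e\<close> by (auto simp: str_ends_def)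
        then show ?thesis using cp e f h Inl \<open>x = Inl e\<close> by (auto simp: cg_def)
      next
        case (Inr n)
        then have n: "n \<in> N" using y by auto
        show ?thesis using key[OF e n] h Inr \<open>x = Inl e\<close> by (auto simp: cg_def)
      qed
    next
      case (Inr n)
      then have n: "n \<in> N" using x by auto
      show ?thesis
      proof (cases y)
        case (Inl f)
        then have f: "f \<in> F" using y by auto
        have "?SE (Inl f) \<inter> ?SE (Inr n) \<noteq> {}" using h Inl \<open>x = Inr n\<close> by auto
        then show ?thesis using key[OF f n] Inl \<open>x = Inr n\<close> by (auto simp: cg_def)
      next
        case (Inr m)
        then have m: "m \<in> N" using y by auto
        show ?thesis using key2[OF n m] h Inr \<open>x = Inr n\<close> by (auto simp: cg_def)
      qed
    qed
  qed
qed



theorem lemma2: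
  fixes V :: "'v set" and E :: "'e set" and ends :: "'e \<Rightarrow> 'v set"
    and a :: 'e and u v :: 'v and k :: nat
  assumes "cubic V E ends"
    and "a \<in> E" and "ends a = {u, v}"
    and "k \<ge> 1"
    and "cubic (str_V V k) (str_E E a k) (str_ends ends u v k)"
  shows "r3 (str_V V k) (str_E E a k) (str_ends ends u v k) = r3 V E ends"
proof -
  note cub = assms(1) and aE = assms(2) and ea = assms(3) and k1 = assms(4)
  let ?V = "str_V V k" and ?E = "str_E E a k" and ?SE = "str_ends ends u v k"
  have mg: "multigraph V E ends" using cub by (simp add: cubic_def)
  have finE: "finite E" using mg by (simp add: multigraph_def)
  have c2: "card (ends a) = 2" using mg aE by (simp add: multigraph_def)
  have uv: "u \<noteq> v" using c2 ea by auto
  have vV: "v \<in> V" using mg aE ea by (auto simp: multigraph_def)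
  have degv: "card {e\<in>E. v \<in> ends e} = 3" using cub vV by (simp add: cubic_def degree_def)
  have finE': "finite ?E" using finE by (simp add: str_E_def)
  have cE1: "card E \<ge> 1" using aE finE by (metis One_nat_def Suc_leI card_gt_0_iff empty_iff)
  have cardE': "card ?E = card E + 6*k"
  proof -
    have "card ?E = card (Inl ` (E - {a}) :: ('e + nat) set) + card (Inr ` {..6*k} :: ('e + nat) set)"
      unfolding str_E_def by (rule card_Un_disjoint) (use finE in auto)
    also have "\<dots> = card (E - {a}) + card {..6*k}"
      by (simp add: card_image)
    also have "\<dots> = card E - 1 + (6*k+1)" using aE finE by simp
    finally show ?thesis using cE1 by simp
  qed
  have SEl: "\<And>e. ?SE (Inl e) = Inl ` ends e" by (simp add: str_ends_def)
  have ge: "nu3 V E ends + 6*k \<le> nu3 ?V ?E ?SE"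
  proof -
    obtain F' where F': "F' \<subseteq> E" "colorable3 ends F'" "card F' = nu3 V E ends"
      using nu3_obt[OF finE] by blast
    obtain col :: "'e \<Rightarrow> nat" where c3: "\<forall>e\<in>F'. col e < 3"
      and cp: "\<forall>e\<in>F'. \<forall>f\<in>F'. e \<noteq> f \<and> ends e \<inter> ends f \<noteq> {} \<longrightarrow> col e \<noteq> col f"
      using F'(2) unfolding colorable3_def by blast
    have finF': "finite F'" using F'(1) finE finite_subset by blast
    show ?thesis
    proof (cases "a \<in> F'")
      case True
      have col: "colorable3 ?SE (Inl ` (F' - {a}) \<union> Inr ` {..6*k})"
      proof (rule build[OF uv k1])
        show "\<forall>e\<in>F' - {a}. col e < 3" using c3 by auto
        show "\<forall>e\<in>F' - {a}. \<forall>f\<in>F' - {a}. e \<noteq> f \<and> ends e \<inter> ends f \<noteq> {} \<longrightarrow> col e \<noteq> col f"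
          using cp by auto
        show "col a < 3" using c3 True by auto
        show "{..6*k} \<subseteq> {..6*k}" by simp
        show "\<forall>e\<in>F' - {a}. u \<in> ends e \<longrightarrow> 6 * k \<in> {..6 * k} \<longrightarrow> col e \<noteq> col a"
          using cp True ea by blast
        show "\<forall>e\<in>F' - {a}. v \<in> ends e \<longrightarrow> 6 * (k - 1) + 5 \<in> {..6 * k} \<longrightarrow> col e \<noteq> col a"
          using cp True ea by blast
      qed
      have sub: "Inl ` (F' - {a}) \<union> Inr ` {..6*k} \<subseteq> ?E" using F'(1) by (auto simp: str_E_def)
      have "card (Inl ` (F' - {a}) \<union> Inr ` {..6*k} :: ('e + nat) set)
          = card (Inl ` (F' - {a}) :: ('e + nat) set) + card (Inr ` {..6*k} :: ('e + nat) set)"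
        by (rule card_Un_disjoint) (use finF' in auto)
      also have "\<dots> = card (F' - {a}) + (6*k+1)" by (simp add: card_image)
      also have "\<dots> = card F' + 6*k" using True finF' card_gt_0_iff[of F'] by auto
      finally show ?thesis using nu3_ge[OF finE' sub col, of ?V] F'(3) by simp
    next
      case False
      let ?C = "col ` {e\<in>F'. v \<in> ends e}"
      have "{e\<in>F'. v \<in> ends e} \<subseteq> {e\<in>E. v \<in> ends e} - {a}" using F'(1) False by auto
      moreover have "card ({e\<in>E. v \<in> ends e} - {a}) = 2" using degv aE ea by simp
      ultimately have "card {e\<in>F'. v \<in> ends e} \<le> 2"
        by (metis (no_types, lifting) card_mono finE finite_Diff finite_subset mem_Collect_eq subsetI)
      then have cC: "card ?C \<le> 2" using card_image_le[of "{e\<in>F'. v \<in> ends e}" col] finF' by simp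
      have "\<exists>d<3. d \<notin> ?C"
      proof (rule ccontr)
        assume "\<not> (\<exists>d<3. d \<notin> ?C)"
        then have "{..<3} \<subseteq> ?C" by auto
        then have "card {..<3::nat} \<le> card ?C" using finF' by (intro card_mono) auto
        then show False using cC by simp
      qed
      then obtain d where d: "d < 3" "d \<notin> ?C" by blast
      have col: "colorable3 ?SE (Inl ` F' \<union> Inr ` {..<6*k})"
      proof (rule build[OF uv k1 c3 cp d(1)])
        show "{..<6*k} \<subseteq> {..6*k}" by auto
        show "\<forall>e\<in>F'. u \<in> ends e \<longrightarrow> 6 * k \<in> {..<6 * k} \<longrightarrow> col e \<noteq> d" by simp
        show "\<forall>e\<in>F'. v \<in> ends e \<longrightarrow> 6 * (k - 1) + 5 \<in> {..<6 * k} \<longrightarrow> col e \<noteq> d"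
          using d(2) by blast
      qed
      have sub: "Inl ` F' \<union> Inr ` {..<6*k} \<subseteq> ?E" using F'(1) False by (auto simp: str_E_def)
      have "card (Inl ` F' \<union> Inr ` {..<6*k} :: ('e + nat) set)
          = card (Inl ` F' :: ('e + nat) set) + card (Inr ` {..<6*k} :: ('e + nat) set)"
        by (rule card_Un_disjoint) (use finF' in auto)
      also have "\<dots> = card F' + 6*k" by (simp add: card_image)
      finally show ?thesis using nu3_ge[OF finE' sub col, of ?V] F'(3) by simp
    qed
  qed
  have le: "nu3 ?V ?E ?SE \<le> nu3 V E ends + 6*k"
  proof (rule nu3_le[OF finE'])
    fix F assume FE: "F \<subseteq> ?E" and cF: "colorable3 ?SE F"
    obtain col :: "'e + nat \<Rightarrow> nat" where c3: "\<forall>e\<in>F. col e < 3"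
      and cp: "\<forall>e\<in>F. \<forall>f\<in>F. e \<noteq> f \<and> ?SE e \<inter> ?SE f \<noteq> {} \<longrightarrow> col e \<noteq> col f"
      using cF unfolding colorable3_def by blast
    define F1 where "F1 = {e. Inl e \<in> F}"
    define N where "N = {n. Inr n \<in> F}"
    have hF: "F = Inl ` F1 \<union> Inr ` N"
    proof (rule set_eqI)
      fix x show "x \<in> F \<longleftrightarrow> x \<in> Inl ` F1 \<union> Inr ` N" by (cases x) (auto simp: F1_def N_def)
    qed
    have F1E: "F1 \<subseteq> E - {a}" using FE by (auto simp: F1_def str_E_def)
    have NE: "N \<subseteq> {..6*k}" using FE by (auto simp: N_def str_E_def)
    have finF1: "finite F1" using F1E finE finite_subset by blast
    have finN: "finite N" using NE finite_subset by blast
    have cardF: "card F = card F1 + card N"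
    proof -
      have "card F = card (Inl ` F1 :: ('e + nat) set) + card (Inr ` N :: ('e + nat) set)"
        unfolding hF by (rule card_Un_disjoint) (use finF1 finN in auto)
      then show ?thesis by (simp add: card_image)
    qed
    have cF1: "colorable3 ends F1" unfolding colorable3_def
    proof (intro exI[of _ "\<lambda>e. col (Inl e)"] conjI ballI impI)
      fix e assume "e \<in> F1" then show "col (Inl e) < 3" using c3 by (auto simp: F1_def)
    next
      fix e f assume "e \<in> F1" "f \<in> F1" "e \<noteq> f \<and> ends e \<inter> ends f \<noteq> {}"
      moreover then have "?SE (Inl e) \<inter> ?SE (Inl f) \<noteq> {}" unfolding SEl by blast
      ultimately show "col (Inl e) \<noteq> col (Inl f)" using cp by (auto simp: F1_def)
    qed
    have F1le: "card F1 \<le> nu3 V E ends" using nu3_ge[OF finE _ cF1] F1E by blast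
    show "card F \<le> nu3 V E ends + 6*k"
    proof (cases "N = {..6*k}")
      case False
      then have "N \<subset> {..6*k}" using NE by blast
      then have "card N < card {..6*k}" using psubset_card_mono[of "{..6*k}" N] by simp
      then show ?thesis using cardF F1le by simp
    next
      case True
      have all: "Inr ` {..6*k} \<subseteq> F" using True hF by auto
      have km: "k - 1 < k" using k1 by simp
      have ch: "col (Inr (6*(k-1)+5)) = col (Inr (6*k))"
        using chain[OF cp c3 all km] .
      have vin: "Inl v \<in> ?SE (Inr (6*(k-1)+5))"
        using ends_new[OF km, of 5 ends u v] k1 by simp
      have uin: "Inl u \<in> ?SE (Inr (6*k))" by (simp add: ends_u)
      have inF: "\<And>n. n \<le> 6*k \<Longrightarrow> Inr n \<in> F" using all by auto
      have aF1: "a \<notin> F1" using F1E by auto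
      define col' where "col' = (\<lambda>e. if e = a then col (Inr (6*k)) else col (Inl e))"
      have adj: "col (Inl f) \<noteq> col (Inr (6*k))" if f: "f \<in> F1" "f \<noteq> a" "ends a \<inter> ends f \<noteq> {}" for f
      proof -
        have fF: "Inl f \<in> F" using f by (simp add: F1_def)
        have "u \<in> ends f \<or> v \<in> ends f" using f(3) ea by auto
        then show ?thesis
        proof
          assume "u \<in> ends f"
          then have "Inl u \<in> ?SE (Inl f) \<inter> ?SE (Inr (6*k))" using uin SEl by auto
          then show ?thesis using cp fF inF[of "6*k"] by blast
        next
          assume "v \<in> ends f"
          then have "Inl v \<in> ?SE (Inl f) \<inter> ?SE (Inr (6*(k-1)+5))" using vin SEl by auto
          moreover have "6*(k-1)+5 \<le> 6*k" using k1 by simp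
          ultimately have "col (Inl f) \<noteq> col (Inr (6*(k-1)+5))" using cp fF inF by blast
          then show ?thesis using ch by simp
        qed
      qed
      have cF': "colorable3 ends (insert a F1)" unfolding colorable3_def
      proof (intro exI[of _ col'] conjI ballI impI)
        fix e assume "e \<in> insert a F1" then show "col' e < 3"
          using c3 inF[of "6*k"] by (auto simp: F1_def col'_def)
      next
        fix e f assume e: "e \<in> insert a F1" and f: "f \<in> insert a F1" and h: "e \<noteq> f \<and> ends e \<inter> ends f \<noteq> {}"
        show "col' e \<noteq> col' f"
        proof (cases "e = a")
          case True
          then have "f \<in> F1" "f \<noteq> a" using f h by auto
          then show ?thesis using adj[of f] h True by (auto simp: col'_def)
        next
          case False
          then have e1: "e \<in> F1" using e by auto
          show ?thesis
          proof (cases "f = a")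
            case True
            then have "ends a \<inter> ends e \<noteq> {}" using h by auto
            then show ?thesis using adj[OF e1 False] True False by (auto simp: col'_def)
          next
            case fa: False
            then have f1: "f \<in> F1" using f by auto
            have "?SE (Inl e) \<inter> ?SE (Inl f) \<noteq> {}" using h unfolding SEl by blast
            then have "col (Inl e) \<noteq> col (Inl f)" using cp e1 f1 h by (auto simp: F1_def)
            then show ?thesis using False fa by (simp add: col'_def)
          qed
        qed
      qed
      have "card (insert a F1) \<le> nu3 V E ends" using nu3_ge[OF finE _ cF'] F1E aE by blast
      then have "card F1 + 1 \<le> nu3 V E ends" using aF1 finF1 by simp
      moreover have "card N = 6*k+1" using True by simp
      ultimately show ?thesis using cardF by simp
    qed
  qed
  show ?thesis unfolding r3_def using cardE' ge le by simp
qed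

end
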